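(* Let $ABC$ be a nondegenerate triangle and $XYZ$ a Miquel triangle of a point $P$ relative to $ABC$. (i) If $P$ is the first Brocard point of $ABC$, then $P$ is the first Brocard point of $XYZ$, i.e. $\angle YXP=\angle ZYP=\angle XZP$. (ii) If $P$ is the second Brocard point of $ABC$, then $P$ is the second Brocard point of $XYZ$, i.e. $\angle PXZ=\angle PYX=\angle PZY$.
   Context: Miquel triangle: given a triangle $ABC$ and a point $P$ not on the lines $BC,CA,AB$, a triangle $XYZ$ with $X$ on line $BC$, $Y$ on line $CA$, $Z$ on line $AB$ is called a Miquel triangle of $P$ relative to $ABC$ if $P$ lies on each of the three circles through $A,Y,Z$, through $B,Z,X$, and through $C,X,Y$. First Brocard point of $ABC$: the point $P$ with $\angle BAP=\angle CBP=\angle ACP$; second Brocard point: the point $P$ with $\angle PAC=\angle PBA=\angle PCB$ (analogously for a triangle $XYZ$ with the vertex order $X,Y,Z$ in place of $A,B,C$). *)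

theory Defs
  imports "HOL-Analysis.Analysis"
begin

definition on_line :: "complex \<Rightarrow> complex \<Rightarrow> complex \<Rightarrow> bool" where
  "on_line X B C \<longleftrightarrow> B \<noteq> C \<and> collinear {B, C, X}"

definition nondeg_triangle :: "complex \<Rightarrow> complex \<Rightarrow> complex \<Rightarrow> bool" where
  "nondeg_triangle A B C \<longleftrightarrow> \<not> collinear {A, B, C}"

definition concyclic :: "complex \<Rightarrow> complex \<Rightarrow> complex \<Rightarrow> complex \<Rightarrow> bool" where
  "concyclic a b c d \<longleftrightarrow>
     (\<exists>ctr r. r > 0 \<and> dist a ctr = r \<and> dist b ctr = r \<and> dist c ctr = r \<and> dist d ctr = r)"

text \<open>Equality of directed angles modulo pi:
  the directed angle at vertex B from line BA to line BC equals
  the directed angle at vertex E from line ED to line EF.\<close>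
definition dangle_eq ::
  "complex \<Rightarrow> complex \<Rightarrow> complex \<Rightarrow> complex \<Rightarrow> complex \<Rightarrow> complex \<Rightarrow> bool" where
  "dangle_eq A B C D E F \<longleftrightarrow>
     A \<noteq> B \<and> C \<noteq> B \<and> D \<noteq> E \<and> F \<noteq> E \<and>
     Im (((C - B) / (A - B)) * cnj ((F - E) / (D - E))) = 0"

definition first_brocard :: "complex \<Rightarrow> complex \<Rightarrow> complex \<Rightarrow> complex \<Rightarrow> bool" where
  "first_brocard A B C P \<longleftrightarrow> dangle_eq B A P C B P \<and> dangle_eq C B P A C P"

definition second_brocard :: "complex \<Rightarrow> complex \<Rightarrow> complex \<Rightarrow> complex \<Rightarrow> bool" where
  "second_brocard A B C P \<longleftrightarrow> dangle_eq P A C P B A \<and> dangle_eq P B A P C B"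

definition miquel_triangle ::
  "complex \<Rightarrow> complex \<Rightarrow> complex \<Rightarrow> complex \<Rightarrow> complex \<Rightarrow> complex \<Rightarrow> complex \<Rightarrow> bool" where
  "miquel_triangle A B C P X Y Z \<longleftrightarrow>
     \<not> on_line P B C \<and> \<not> on_line P C A \<and> \<not> on_line P A B \<and>
     nondeg_triangle X Y Z \<and>
     on_line X B C \<and> on_line Y C A \<and> on_line Z A B \<and>
     concyclic A Y Z P \<and> concyclic B Z X P \<and> concyclic C X Y P"

end

theory Submission
  imports Defs
begin

definition par :: "complex \<Rightarrow> complex \<Rightarrow> bool" where
  "par a b \<longleftrightarrow> Im (a * cnj b) = 0"

lemma par_sym: "par a b \<Longrightarrow> par b a"
  unfolding par_def by (simp add: algebra_simps)

lemma par_refl: "par a a"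
  unfolding par_def by (simp add: algebra_simps)

lemma par_trans: "par a b \<Longrightarrow> par b c \<Longrightarrow> b \<noteq> 0 \<Longrightarrow> par a c"
  unfolding par_def
proof -
  assume h1: "Im (a * cnj b) = 0" and h2: "Im (b * cnj c) = 0" and b: "b \<noteq> 0"
  have bb: "b * cnj b = of_real ((cmod b)^2)" using complex_norm_square by (metis of_real_power)
  have "(a * cnj b) * (b * cnj c) = (a * cnj c) * (b * cnj b)"
    by (simp add: mult_ac)
  also have "\<dots> = (a * cnj c) * of_real ((cmod b)^2)" by (simp only: bb)
  finally have e: "(a * cnj b) * (b * cnj c) = (a * cnj c) * of_real ((cmod b)^2)" .
  have "Im ((a * cnj b) * (b * cnj c)) = 0" using h1 h2 by simp
  hence "Im (a * cnj c) * (cmod b)^2 = 0" unfolding e by simp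
  thus "Im (a * cnj c) = 0" using b by simp
qed

lemma par_mult: "par a b \<Longrightarrow> par (a * c) (b * c)"
  unfolding par_def
proof -
  assume "Im (a * cnj b) = 0"
  moreover have "Im (a * c * cnj (b * c)) = Im (a * cnj b) * ((Re c)^2 + (Im c)^2)"
    by (simp add: algebra_simps power2_eq_square)
  ultimately show "Im (a * c * cnj (b * c)) = 0" by simp
qed

lemma par_mult_real: "par a b \<Longrightarrow> Im c = 0 \<Longrightarrow> par a (b * c)"
  unfolding par_def by (simp add: algebra_simps)

lemma par_div: "par a b \<Longrightarrow> par (a / c) (b / c)"
  using par_mult[of a b "inverse c"] by (simp add: divide_inverse)

lemma par_inv: "par a b \<Longrightarrow> par (1/a) (1/b)"
  unfolding par_def
proof -
  assume h: "Im (a * cnj b) = 0"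
  have "1/a * cnj (1/b) = 1 / (a * cnj b)" by (simp add: complex_cnj_divide)
  thus "Im (1 / a * cnj (1 / b)) = 0" using h by (simp add: Im_divide)
qed

lemma coll_par: "collinear {B, C, X} \<longleftrightarrow> par (X - B) (C - B)"
proof (cases "C = B")
  case True thus ?thesis by (simp add: par_def collinear_2 insert_commute)
next
  case False
  have "collinear {B, C, X} \<longleftrightarrow> collinear {C, B, X}" by (simp add: insert_commute)
  also have "\<dots> \<longleftrightarrow> collinear {0, C - B, X - B}"
    by (cases "B = 0") (auto simp: collinear_3)
  also have "\<dots> \<longleftrightarrow> (X - B) / (C - B) \<in> \<real>" by (rule collinear_iff_Reals)
  also have "\<dots> \<longleftrightarrow> par (X - B) (C - B)"
  proof -
    have cc: "(C - B) * cnj (C - B) = of_real ((cmod (C - B))^2)" using complex_norm_square by (metis of_real_power)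
    have "(X - B) / (C - B) = (X - B) * cnj (C - B) / ((C - B) * cnj (C - B))"
      using False by (metis complex_cnj_cancel_iff complex_cnj_zero mult_divide_mult_cancel_right right_minus_eq)
    hence "(X - B) / (C - B) = (X - B) * cnj (C - B) / of_real ((cmod (C - B))^2)" by (simp only: cc)
    thus ?thesis using False by (simp add: par_def complex_is_Real_iff Im_divide)
  qed
  finally show ?thesis .
qed

lemma cnj_on_circle:
  assumes "cmod x = r" "r > 0"
  shows "cnj x = of_real (r^2) / x"
proof -
  have x: "x \<noteq> 0" using assms by auto
  have "x * cnj x = of_real (r^2)" using complex_norm_square[of x] assms by simp
  thus ?thesis using x by (simp add: field_simps)
qed

lemma Im_zero_if_cnj: "cnj z = z \<Longrightarrow> Im z = 0"
proof -
  assume "cnj z = z"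
  hence "Im (cnj z) = Im z" by simp
  thus "Im z = 0" by simp
qed

lemma inscribed:
  assumes "cmod (X - ctr) = r" "cmod (C - ctr) = r" "cmod (Y - ctr) = r" "cmod (P - ctr) = r" "r > 0"
    and "X \<noteq> Y" "X \<noteq> P" "C \<noteq> Y" "C \<noteq> P"
  shows "par ((P - X) / (Y - X)) ((P - C) / (Y - C))"
proof -
  define x where "x = X - ctr"
  define c where "c = C - ctr"
  define y where "y = Y - ctr"
  define p where "p = P - ctr"
  have cx: "cnj x = of_real (r^2) / x" unfolding x_def by (rule cnj_on_circle) (use assms in auto)
  have cc: "cnj c = of_real (r^2) / c" unfolding c_def by (rule cnj_on_circle) (use assms in auto)
  have cy: "cnj y = of_real (r^2) / y" unfolding y_def by (rule cnj_on_circle) (use assms in auto)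
  have cp: "cnj p = of_real (r^2) / p" unfolding p_def by (rule cnj_on_circle) (use assms in auto)
  have nz: "x \<noteq> 0" "c \<noteq> 0" "y \<noteq> 0" "p \<noteq> 0" using assms x_def c_def y_def p_def by auto
  have d: "x \<noteq> y" "x \<noteq> p" "c \<noteq> y" "c \<noteq> p" using assms x_def c_def y_def p_def by auto
  have r0: "(of_real (r^2) :: complex) \<noteq> 0" using assms by simp
  have e1: "(P - X) / (Y - X) = (p - x) / (y - x)" by (simp add: x_def y_def p_def)
  have e2: "(P - C) / (Y - C) = (p - c) / (y - c)" by (simp add: c_def y_def p_def)
  define q1 where "q1 = (p - x) / (y - x)"
  define q2 where "q2 = (p - c) / (y - c)"
  have k1: "cnj q1 = q1 * y / p"
    unfolding q1_def complex_cnj_divide complex_cnj_diff cx cy cp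
    using nz d r0 by (simp add: field_simps)
  have k2: "cnj q2 = q2 * y / p"
    unfolding q2_def complex_cnj_divide complex_cnj_diff cc cy cp
    using nz d r0 by (simp add: field_simps)
  have "cnj (q1 * cnj q2) = cnj q1 * q2" by simp
  also have "\<dots> = q1 * cnj q2" by (simp only: k1 k2) (simp add: mult_ac)
  finally have "cnj (q1 * cnj q2) = q1 * cnj q2" .
  hence "Im (q1 * cnj q2) = 0" by (rule Im_zero_if_cnj)
  thus ?thesis unfolding par_def e1 e2 q1_def q2_def .
qed

lemma par_real_multiple:
  assumes "par u d" "d \<noteq> 0"
  shows "\<exists>t. u = of_real t * d"
proof -
  have dd: "d * cnj d = of_real ((cmod d)^2)" using complex_norm_square by (metis of_real_power)
  have "u / d = u * cnj d / (d * cnj d)" using assms(2) by simp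
  also have "\<dots> = u * cnj d / of_real ((cmod d)^2)" by (simp only: dd)
  finally have e: "u / d = u * cnj d / of_real ((cmod d)^2)" .
  have "Im (u / d) = 0" unfolding e using assms(1) by (simp add: par_def Im_divide_of_real)
  hence "u / d = of_real (Re (u / d))" by (simp add: complex_eq_iff)
  hence "u = of_real (Re (u / d)) * d" using assms(2) by (simp add: field_simps)
  thus ?thesis by blast
qed

lemma tangent:
  assumes "cmod (A - ctr) = r" "cmod (C - ctr) = r" "cmod (P - ctr) = r" "cmod (Z - ctr) = r" "r > 0"
    and "par (Z - A) (B - A)" "\<not> par (P - A) (B - A)" "A \<noteq> B" "C \<noteq> A" "C \<noteq> P"
    and "par ((P - A) / (B - A)) ((P - C) / (A - C))"
  shows "Z = A"
proof (rule ccontr)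
  assume ZA: "Z \<noteq> A"
  have ZP: "Z \<noteq> P" using assms(6,7) by auto
  have i: "par ((P - Z) / (A - Z)) ((P - C) / (A - C))"
    by (rule inscribed[of Z ctr r C A P]) (use assms ZA ZP in auto)
  have nz: "(P - C) / (A - C) \<noteq> 0" using assms by auto
  have j: "par ((P - Z) / (A - Z)) ((P - A) / (B - A))"
    using par_trans[OF i par_sym[OF assms(11)] nz] .
  obtain t where t: "Z - A = of_real t * (B - A)" using par_real_multiple[OF assms(6)] assms(8) by auto
  have t0: "t \<noteq> 0" using t ZA by auto
  define d where "d = B - A"
  have d0: "d \<noteq> 0" using assms(8) d_def by auto
  have Zeq: "Z = A + of_real t * d" unfolding d_def t[symmetric] by simp
  have k: "par ((P - Z) / (A - Z) * (- of_real t * d)) ((P - A) / (B - A) * (- of_real t * d))"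
    by (rule par_mult[OF j])
  have e1: "(P - Z) / (A - Z) * (- of_real t * d) = (P - A) - of_real t * d"
    using t0 d0 unfolding Zeq by (simp add: field_simps)
  have e2: "(P - A) / (B - A) * (- of_real t * d) = (P - A) * (- of_real t)"
    using t0 d0 unfolding d_def by (simp add: field_simps)
  have "par ((P - A) - of_real t * d) ((P - A) * (- of_real t))" using k e1 e2 by simp
  hence "Im (((P - A) - of_real t * d) * cnj ((P - A) * (- of_real t))) = 0" by (simp add: par_def)
  hence "t * (t * Im (d * cnj (P - A))) = 0"
    by (simp add: algebra_simps)
  hence "Im (d * cnj (P - A)) = 0" using t0 by simp
  hence "Im ((B - A) * cnj (P - A)) = 0" using d_def by simp
  hence "Im ((P - A) * cnj (B - A)) = 0" by (simp add: algebra_simps)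
  hence "par (P - A) (B - A)" by (simp add: par_def)
  thus False using assms(7) by simp
qed

lemma par_zero: "par 0 b" by (simp add: par_def)

lemma key1:
  assumes AB: "A \<noteq> B" and BC: "B \<noteq> C" and CA: "C \<noteq> A"
    and nPBC: "\<not> par (P - B) (C - B)" and nPCA: "\<not> par (P - C) (A - C)" and nPAB: "\<not> par (P - A) (B - A)"
    and lX: "par (X - B) (C - B)" and lY: "par (Y - C) (A - C)" and lZ: "par (Z - A) (B - A)"
    and XY: "X \<noteq> Y" and YZ: "Y \<noteq> Z" and ZX: "Z \<noteq> X"
    and cA: "concyclic A Y Z P" and cB: "concyclic B Z X P" and cC: "concyclic C X Y P"
    and b1: "par ((P - A) / (B - A)) ((P - B) / (C - B))"
    and b2: "par ((P - B) / (C - B)) ((P - C) / (A - C))"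
  shows "par ((P - X) / (Y - X)) ((P - C) / (A - C))"
proof -
  have PA: "P \<noteq> A" using nPAB par_zero by auto
  have PB: "P \<noteq> B" using nPBC par_zero by auto
  have PC: "P \<noteq> C" using nPCA par_zero by auto
  have PX: "P \<noteq> X" using nPBC lX by auto
  have PY: "P \<noteq> Y" using nPCA lY by auto
  have PZ: "P \<noteq> Z" using nPAB lZ by auto
  have nzB: "(P - B) / (C - B) \<noteq> 0" using PB BC by auto
  have nzC: "(P - C) / (A - C) \<noteq> 0" using PC CA by auto
  show ?thesis
  proof (cases "Y = C")
    case False
    obtain s where s: "Y - C = of_real s * (A - C)" using par_real_multiple[OF lY] CA by auto
    have s0: "s \<noteq> 0" using s False by auto
    have e: "(P - C) / (Y - C) = (P - C) / (A - C) * of_real (1 / s)"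
      unfolding s using s0 CA by (simp add: field_simps)
    have "par ((P - C) / (A - C) * of_real (1 / s)) ((P - C) / (A - C))"
      using par_sym[OF par_mult_real[OF par_refl, of "of_real (1/s)" "(P - C) / (A - C)"]] by simp
    hence yc: "par ((P - C) / (Y - C)) ((P - C) / (A - C))" unfolding e .
    show ?thesis
    proof (cases "X = C")
      case True thus ?thesis using yc by simp
    next
      case XC: False
      obtain ctr r where c: "r > 0" "cmod (C - ctr) = r" "cmod (X - ctr) = r"
        "cmod (Y - ctr) = r" "cmod (P - ctr) = r" using cC unfolding concyclic_def dist_norm by blast
      have i: "par ((P - X) / (Y - X)) ((P - C) / (Y - C))"
        by (rule inscribed[of X ctr r C Y P]) (use c XY PX False PC in auto)
      have nz: "(P - C) / (Y - C) \<noteq> 0" using PC False by auto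
      show ?thesis by (rule par_trans[OF i yc nz])
    qed
  next
    case True
    have b3: "par ((P - A) / (B - A)) ((P - C) / (A - C))" by (rule par_trans[OF b1 b2 nzB])
    obtain ctr r where c: "r > 0" "cmod (A - ctr) = r" "cmod (Y - ctr) = r"
      "cmod (Z - ctr) = r" "cmod (P - ctr) = r" using cA unfolding concyclic_def dist_norm by blast
    have ZA: "Z = A"
      by (rule tangent[of A ctr r C P Z B]) (use c True lZ nPAB AB CA PC b3 in auto)
    obtain ctr' r' where c': "r' > 0" "cmod (B - ctr') = r'" "cmod (Z - ctr') = r'"
      "cmod (X - ctr') = r'" "cmod (P - ctr') = r'" using cB unfolding concyclic_def dist_norm by blast
    have XB: "X = B"
      by (rule tangent[of B ctr' r' A P X C]) (use c' ZA lX nPBC BC AB PA par_sym[OF b1] in auto)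
    show ?thesis using XB True b2 by simp
  qed
qed

lemma dangle_par: "dangle_eq A B C D E F \<longleftrightarrow>
   A \<noteq> B \<and> C \<noteq> B \<and> D \<noteq> E \<and> F \<noteq> E \<and> par ((C - B) / (A - B)) ((F - E) / (D - E))"
  by (simp add: dangle_eq_def par_def)

lemma ncoll_distinct: "\<not> collinear {A, B, C} \<Longrightarrow> A \<noteq> B \<and> B \<noteq> C \<and> C \<noteq> A"
  by (auto simp: collinear_2 insert_commute)

lemma part1:
  assumes nd: "nondeg_triangle A B C" and mq: "miquel_triangle A B C P X Y Z" and fb: "first_brocard A B C P"
  shows "first_brocard X Y Z P"
proof -
  have d: "A \<noteq> B" "B \<noteq> C" "C \<noteq> A" using ncoll_distinct nd unfolding nondeg_triangle_def by auto
  have dX: "X \<noteq> Y" "Y \<noteq> Z" "Z \<noteq> X" using ncoll_distinct mq unfolding miquel_triangle_def nondeg_triangle_def by auto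
  have nP: "\<not> par (P - B) (C - B)" "\<not> par (P - C) (A - C)" "\<not> par (P - A) (B - A)"
    using mq d unfolding miquel_triangle_def on_line_def coll_par by auto
  have l: "par (X - B) (C - B)" "par (Y - C) (A - C)" "par (Z - A) (B - A)"
    using mq unfolding miquel_triangle_def on_line_def coll_par by auto
  have c: "concyclic A Y Z P" "concyclic B Z X P" "concyclic C X Y P"
    using mq unfolding miquel_triangle_def by auto
  have b1: "par ((P - A) / (B - A)) ((P - B) / (C - B))"
   and b2: "par ((P - B) / (C - B)) ((P - C) / (A - C))"
    using fb unfolding first_brocard_def dangle_par by auto
  have PA: "P \<noteq> A" using nP par_zero by auto
  have PB: "P \<noteq> B" using nP par_zero by auto
  have PC: "P \<noteq> C" using nP par_zero by auto
  have PX: "P \<noteq> X" using nP l by auto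
  have PY: "P \<noteq> Y" using nP l by auto
  have PZ: "P \<noteq> Z" using nP l by auto
  have nzA: "(P - A) / (B - A) \<noteq> 0" using PA d by auto
  have nzB: "(P - B) / (C - B) \<noteq> 0" using PB d by auto
  have nzC: "(P - C) / (A - C) \<noteq> 0" using PC d by auto
  have b3: "par ((P - C) / (A - C)) ((P - A) / (B - A))"
    using par_sym[OF par_trans[OF b1 b2 nzB]] .
  have k1: "par ((P - X) / (Y - X)) ((P - C) / (A - C))"
    by (rule key1) (use d nP l dX c b1 b2 in auto)
  have k2: "par ((P - Y) / (Z - Y)) ((P - A) / (B - A))"
    by (rule key1[of B C A]) (use d nP l dX c b2 b3 in auto)
  have k3: "par ((P - Z) / (X - Z)) ((P - B) / (C - B))"
    by (rule key1[of C A B]) (use d nP l dX c b3 b1 in auto)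
  have g1: "par ((P - X) / (Y - X)) ((P - Y) / (Z - Y))"
    using par_trans[OF par_trans[OF k1 b3 nzC] par_sym[OF k2] nzA] .
  have g2: "par ((P - Y) / (Z - Y)) ((P - Z) / (X - Z))"
    using par_trans[OF par_trans[OF k2 b1 nzA] par_sym[OF k3] nzB] .
  show ?thesis unfolding first_brocard_def dangle_par using g1 g2 dX PX PY PZ by auto
qed

lemma sec_first: "second_brocard A B C P \<longleftrightarrow> first_brocard A C B P"
proof -
  have gen: "par u w \<and> par w v" if "par u v" "par v w" "u \<noteq> 0" "v \<noteq> 0" "w \<noteq> 0" for u v w
    using par_trans[OF that(1,2,4)] par_sym[OF that(2)] by auto
  have gen2: "par u v \<and> par v w" if "par u w" "par w v" "u \<noteq> 0" "v \<noteq> 0" "w \<noteq> 0" for u v w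
    using par_trans[OF that(1,2,5)] par_sym[OF that(2)] by auto
  have inv: "par (1/a) (1/b) \<longleftrightarrow> par a b" for a b :: complex
    using par_inv[of a b] par_inv[of "1/a" "1/b"] by auto
  show ?thesis
    unfolding second_brocard_def first_brocard_def dangle_par
  proof
    assume h: "(P \<noteq> A \<and> C \<noteq> A \<and> P \<noteq> B \<and> A \<noteq> B \<and> par ((C - A) / (P - A)) ((A - B) / (P - B))) \<and>
      P \<noteq> B \<and> A \<noteq> B \<and> P \<noteq> C \<and> B \<noteq> C \<and> par ((A - B) / (P - B)) ((B - C) / (P - C))"
    have "par ((C - A) / (P - A)) ((B - C) / (P - C)) \<and> par ((B - C) / (P - C)) ((A - B) / (P - B))"
      by (rule gen) (use h in auto)
    hence "par (1 / ((C - A) / (P - A))) (1 / ((B - C) / (P - C))) \<and> par (1 / ((B - C) / (P - C))) (1 / ((A - B) / (P - B)))"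
      using inv by blast
    thus "(C \<noteq> A \<and> P \<noteq> A \<and> B \<noteq> C \<and> P \<noteq> C \<and> par ((P - A) / (C - A)) ((P - C) / (B - C))) \<and>
      B \<noteq> C \<and> P \<noteq> C \<and> A \<noteq> B \<and> P \<noteq> B \<and> par ((P - C) / (B - C)) ((P - B) / (A - B))"
      using h by simp
  next
    assume h: "(C \<noteq> A \<and> P \<noteq> A \<and> B \<noteq> C \<and> P \<noteq> C \<and> par ((P - A) / (C - A)) ((P - C) / (B - C))) \<and>
      B \<noteq> C \<and> P \<noteq> C \<and> A \<noteq> B \<and> P \<noteq> B \<and> par ((P - C) / (B - C)) ((P - B) / (A - B))"
    hence "par (1 / ((C - A) / (P - A))) (1 / ((B - C) / (P - C))) \<and> par (1 / ((B - C) / (P - C))) (1 / ((A - B) / (P - B)))"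
      by simp
    hence "par ((C - A) / (P - A)) ((B - C) / (P - C)) \<and> par ((B - C) / (P - C)) ((A - B) / (P - B))"
      using inv by blast
    hence "par ((C - A) / (P - A)) ((A - B) / (P - B)) \<and> par ((A - B) / (P - B)) ((B - C) / (P - C))"
      by (intro gen2) (use h in auto)
    thus "(P \<noteq> A \<and> C \<noteq> A \<and> P \<noteq> B \<and> A \<noteq> B \<and> par ((C - A) / (P - A)) ((A - B) / (P - B))) \<and>
      P \<noteq> B \<and> A \<noteq> B \<and> P \<noteq> C \<and> B \<noteq> C \<and> par ((A - B) / (P - B)) ((B - C) / (P - C))"
      using h by simp
  qed
qed

lemma miquel_swap: "miquel_triangle A B C P X Y Z \<Longrightarrow> miquel_triangle A C B P X Z Y"
  unfolding miquel_triangle_def on_line_def concyclic_def nondeg_triangle_def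
  by (auto simp: insert_commute)

theorem theorem8:
  fixes A B C P X Y Z :: complex
  assumes "nondeg_triangle A B C"
    and "miquel_triangle A B C P X Y Z"
  shows "(first_brocard A B C P \<longrightarrow> first_brocard X Y Z P)
       \<and> (second_brocard A B C P \<longrightarrow> second_brocard X Y Z P)"
proof
  show "first_brocard A B C P \<longrightarrow> first_brocard X Y Z P" using part1 assms by blast
  show "second_brocard A B C P \<longrightarrow> second_brocard X Y Z P"
  proof
    assume "second_brocard A B C P"
    hence "first_brocard A C B P" by (simp add: sec_first)
    moreover have "nondeg_triangle A C B" using assms(1) by (simp add: nondeg_triangle_def insert_commute)
    ultimately have "first_brocard X Z Y P" using part1 miquel_swap[OF assms(2)] by blast
    thus "second_brocard X Y Z P" by (simp add: sec_first)
  qed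
qed

end
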